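(* Let $G$ be a group. Suppose $G$ has a $k$-paradoxical decomposition with translating sets $S_1,\ldots,S_k$ and an $l$-paradoxical decomposition with translating sets $T_1,\ldots,T_l$. Then $G$ has a $kl$-paradoxical decomposition with translating sets $\{S_iT_j: 1\le i\le k,\ 1\le j\le l\}$.
   Context: For $k\geq2$, $G$ admits a $k$-paradoxical decomposition with translating sets $S_1=\{g_{1,1},\ldots,g_{1,n_1}\},\ldots,S_k=\{g_{k,1},\ldots,g_{k,n_k}\}$ (finite subsets of $G$) if there are pairwise disjoint subsets $P_{i,j}$ ($1\le i\le k$, $1\le j\le n_i$) of $G$ such that $G=\bigcup_{j=1}^{n_i}P_{i,j}g_{i,j}$ for each $i$. $S_iT_j=\{st: s\in S_i, t\in T_j\}$. *)

theory Defs
  imports "HOL-Algebra.Coset"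
begin

text \<open>A k-paradoxical decomposition is the case card I = k.\<close>

definition paradoxical_decomposition ::
  "('a, 'b) monoid_scheme \<Rightarrow> 'i set \<Rightarrow> ('i \<Rightarrow> 'a set) \<Rightarrow> ('i \<Rightarrow> 'a \<Rightarrow> 'a set) \<Rightarrow> bool"
where
  "paradoxical_decomposition G I S P \<longleftrightarrow>
     (\<forall>i\<in>I. finite (S i) \<and> S i \<subseteq> carrier G) \<and>
     (\<forall>i\<in>I. \<forall>g\<in>S i. P i g \<subseteq> carrier G) \<and>
     (\<forall>i\<in>I. \<forall>g\<in>S i. \<forall>i'\<in>I. \<forall>g'\<in>S i'. (i, g) \<noteq> (i', g') \<longrightarrow> P i g \<inter> P i' g' = {}) \<and>
     (\<forall>i\<in>I. carrier G = (\<Union>g\<in>S i. P i g #>\<^bsub>G\<^esub> g))"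

definition has_paradoxical_decomposition ::
  "('a, 'b) monoid_scheme \<Rightarrow> 'i set \<Rightarrow> ('i \<Rightarrow> 'a set) \<Rightarrow> bool"
where
  "has_paradoxical_decomposition G I S \<longleftrightarrow>
     finite I \<and> card I \<ge> 2 \<and> (\<exists>P. paradoxical_decomposition G I S P)"

end

theory Submission
  imports Defs
begin

theorem lemma3p3:
  fixes G (structure) and k l :: nat
    and S T :: "nat \<Rightarrow> 'a set"
  assumes "group G"
    and "has_paradoxical_decomposition G {1..k} S"
    and "has_paradoxical_decomposition G {1..l} T"
  shows "has_paradoxical_decomposition G ({1..k} \<times> {1..l}) (\<lambda>(i, j). S i <#> T j)"
proof -
  interpret group G by fact
  obtain P where P: "paradoxical_decomposition G {1..k} S P" and k: "card {1..k} \<ge> 2"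
    using assms(2) unfolding has_paradoxical_decomposition_def by blast
  obtain Q where Q: "paradoxical_decomposition G {1..l} T Q" and l: "card {1..l} \<ge> 2"
    using assms(3) unfolding has_paradoxical_decomposition_def by blast
  have Pf: "\<And>i. i \<in> {1..k} \<Longrightarrow> finite (S i) \<and> S i \<subseteq> carrier G"
    and Ps: "\<And>i g. i \<in> {1..k} \<Longrightarrow> g \<in> S i \<Longrightarrow> P i g \<subseteq> carrier G"
    and Pdj: "\<And>i g i' g'. i \<in> {1..k} \<Longrightarrow> g \<in> S i \<Longrightarrow> i' \<in> {1..k} \<Longrightarrow> g' \<in> S i' \<Longrightarrow> (i, g) \<noteq> (i', g') \<Longrightarrow> P i g \<inter> P i' g' = {}"
    and Pc: "\<And>i. i \<in> {1..k} \<Longrightarrow> carrier G = (\<Union>g\<in>S i. P i g #> g)"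
    using P unfolding paradoxical_decomposition_def by blast+
  have Qf: "\<And>i. i \<in> {1..l} \<Longrightarrow> finite (T i) \<and> T i \<subseteq> carrier G"
    and Qs: "\<And>i g. i \<in> {1..l} \<Longrightarrow> g \<in> T i \<Longrightarrow> Q i g \<subseteq> carrier G"
    and Qdj: "\<And>i g i' g'. i \<in> {1..l} \<Longrightarrow> g \<in> T i \<Longrightarrow> i' \<in> {1..l} \<Longrightarrow> g' \<in> T i' \<Longrightarrow> (i, g) \<noteq> (i', g') \<Longrightarrow> Q i g \<inter> Q i' g' = {}"
    and Qc: "\<And>i. i \<in> {1..l} \<Longrightarrow> carrier G = (\<Union>g\<in>T i. Q i g #> g)"
    using Q unfolding paradoxical_decomposition_def by blast+
  define R where "R = (\<lambda>(i,j) g. {x \<in> carrier G. \<exists>s\<in>S i. \<exists>t\<in>T j. g = s \<otimes> t \<and> x \<in> P i s \<and> x \<otimes> s \<in> Q j t})"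
  have card: "card ({1..k} \<times> {1..l}) \<ge> 2"
  proof -
    have "card ({1..k} \<times> {1..l}) = card {1..k} * card {1..l}" by (rule card_cartesian_product)
    moreover have "card {1..k} * card {1..l} \<ge> 2 * 1" using k l by (intro mult_mono) auto
    ultimately show ?thesis by simp
  qed
  have fin: "\<forall>ij\<in>{1..k} \<times> {1..l}. finite ((\<lambda>(i, j). S i <#> T j) ij) \<and> (\<lambda>(i, j). S i <#> T j) ij \<subseteq> carrier G"
  proof
    fix ij assume "ij \<in> {1..k} \<times> {1..l}"
    then obtain i j where ij: "ij = (i,j)" "i \<in> {1..k}" "j \<in> {1..l}" by auto
    have "finite (S i)" "S i \<subseteq> carrier G" "finite (T j)" "T j \<subseteq> carrier G"
      using Pf[OF ij(2)] Qf[OF ij(3)] by auto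
    then show "finite ((\<lambda>(i, j). S i <#> T j) ij) \<and> (\<lambda>(i, j). S i <#> T j) ij \<subseteq> carrier G"
      unfolding ij set_mult_def by auto
  qed
  have sub: "\<forall>ij\<in>{1..k} \<times> {1..l}. \<forall>g\<in>(\<lambda>(i, j). S i <#> T j) ij. R ij g \<subseteq> carrier G"
    unfolding R_def by auto
  have disj: "\<forall>ij\<in>{1..k} \<times> {1..l}. \<forall>g\<in>(\<lambda>(i, j). S i <#> T j) ij. \<forall>ij'\<in>{1..k} \<times> {1..l}.
      \<forall>g'\<in>(\<lambda>(i, j). S i <#> T j) ij'. (ij, g) \<noteq> (ij', g') \<longrightarrow> R ij g \<inter> R ij' g' = {}"
  proof (intro ballI impI)
    fix ij ij' and g g' :: 'a
    assume a: "ij \<in> {1..k} \<times> {1..l}" "ij' \<in> {1..k} \<times> {1..l}" "(ij, g) \<noteq> (ij', g')"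
    obtain i j where ij: "ij = (i,j)" "i \<in> {1..k}" "j \<in> {1..l}" using a by auto
    obtain i' j' where ij': "ij' = (i',j')" "i' \<in> {1..k}" "j' \<in> {1..l}" using a by auto
    show "R ij g \<inter> R ij' g' = {}"
    proof (rule ccontr)
      assume "R ij g \<inter> R ij' g' \<noteq> {}"
      then obtain x where "x \<in> R (i,j) g" "x \<in> R (i',j') g'" using ij ij' by auto
      then obtain s t s' t' where x: "x \<in> carrier G" "s \<in> S i" "t \<in> T j" "g = s \<otimes> t" "x \<in> P i s"
        "x \<otimes> s \<in> Q j t" "s' \<in> S i'" "t' \<in> T j'" "g' = s' \<otimes> t'" "x \<in> P i' s'" "x \<otimes> s' \<in> Q j' t'"
        unfolding R_def by (simp only: prod.case mem_Collect_eq) blast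
      have "(i, s) = (i', s')"
      proof (rule ccontr)
        assume "(i, s) \<noteq> (i', s')"
        then have "P i s \<inter> P i' s' = {}" using Pdj ij ij' x by blast
        then show False using x by auto
      qed
      then have e: "i = i'" "s = s'" by auto
      have "(j, t) = (j', t')"
      proof (rule ccontr)
        assume "(j, t) \<noteq> (j', t')"
        then have "Q j t \<inter> Q j' t' = {}" using Qdj ij ij' x e by blast
        then show False using x e by auto
      qed
      then show False using a(3) ij ij' e x by auto
    qed
  qed
  have cov: "\<forall>ij\<in>{1..k} \<times> {1..l}. carrier G = (\<Union>g\<in>(\<lambda>(i, j). S i <#> T j) ij. R ij g #> g)"
  proof
    fix ij assume "ij \<in> {1..k} \<times> {1..l}"
    then obtain i j where ij: "ij = (i,j)" "i \<in> {1..k}" "j \<in> {1..l}" by auto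
    have Sc: "S i \<subseteq> carrier G" and Tc: "T j \<subseteq> carrier G" using Pf[OF ij(2)] Qf[OF ij(3)] by auto
    show "carrier G = (\<Union>g\<in>(\<lambda>(i, j). S i <#> T j) ij. R ij g #> g)"
    proof
      show "(\<Union>g\<in>(\<lambda>(i, j). S i <#> T j) ij. R ij g #> g) \<subseteq> carrier G"
        unfolding ij R_def r_coset_def set_mult_def using Sc Tc by auto
    next
      show "carrier G \<subseteq> (\<Union>g\<in>(\<lambda>(i, j). S i <#> T j) ij. R ij g #> g)"
      proof
        fix y assume y: "y \<in> carrier G"
        then have "y \<in> (\<Union>t\<in>T j. Q j t #> t)" using Qc[OF ij(3)] by blast
        then obtain t q where t: "t \<in> T j" "q \<in> Q j t" "y = q \<otimes> t" unfolding r_coset_def by auto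
        have qc: "q \<in> carrier G" using Qs[OF ij(3) t(1)] t(2) by blast
        then have "q \<in> (\<Union>s\<in>S i. P i s #> s)" using Pc[OF ij(2)] by blast
        then obtain s x where s: "s \<in> S i" "x \<in> P i s" "q = x \<otimes> s" unfolding r_coset_def by auto
        have xc: "x \<in> carrier G" using Ps[OF ij(2) s(1)] s(2) by blast
        have sc: "s \<in> carrier G" "t \<in> carrier G" using Sc Tc s t by auto
        have "x \<in> R ij (s \<otimes> t)" unfolding R_def ij using xc s t by auto
        moreover have "y = x \<otimes> (s \<otimes> t)" using t s xc sc by (simp add: m_assoc)
        moreover have "s \<otimes> t \<in> (\<lambda>(i, j). S i <#> T j) ij" unfolding ij set_mult_def using s t by auto
        ultimately show "y \<in> (\<Union>g\<in>(\<lambda>(i, j). S i <#> T j) ij. R ij g #> g)"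
          unfolding r_coset_def by blast
      qed
    qed
  qed
  have "paradoxical_decomposition G ({1..k} \<times> {1..l}) (\<lambda>(i, j). S i <#> T j) R"
    unfolding paradoxical_decomposition_def using fin sub disj cov by blast
  then show ?thesis unfolding has_paradoxical_decomposition_def using card by blast
qed

end
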